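(* Let $k\geq 2$ be an integer and let $G$ be a graph on $n$ vertices with minimum degree $\delta=\delta(G)>\frac{(k-1)n}{k}$. Suppose $V(G)$ is partitioned into classes $U_1,U_2,X_1,\dots,X_{k-1},A$ such that (a) there are no edges between $U_1$ and $U_2$; (b) all copies of $K_k$ in $G$ consisting of an edge of $G[U_1]$ together with one vertex from each of $X_1,\dots,X_{k-2}$ are pairwise $K_{k+1}$-connected; (c) $|X_i|\leq n-\delta$ for $i\in[k-1]$; (d) $X_i\cap\Gamma(g)$ is an independent set for each $i\in[k-2]$ and each copy $g$ of $K_{i+1}$ consisting of an edge of $G[U_1]$ together with one vertex from each of $X_1,\dots,X_{i-1}$. Let $F$ be a matching in $G[U_1]$ and set $q:=k\delta-(k-1)n+|U_2|-|U_1|-|A|$. Then $G$ contains a connected $K_{k+1}$-factor of size at least $(k+1)\min\{|F|,q\}$.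
   Context: A $K_{k+1}$-walk in $G$ is a sequence of copies of $K_k$ in which consecutive copies lie in a common copy of $K_{k+1}$; its endpoints are then $K_{k+1}$-connected; the equivalence classes of copies of $K_k$ are the $K_{k+1}$-components. A $K_{k+1}$-factor is a set of vertex-disjoint copies of $K_{k+1}$; it is connected if all copies of $K_k$ contained in its members lie in one component; its size is the number of vertices it covers. $\Gamma(g)$ is the common neighbourhood of the vertices of $g$. *)

theory Defs
  imports Main
begin

definition simple_graph :: "'a set \<Rightarrow> ('a \<Rightarrow> 'a \<Rightarrow> bool) \<Rightarrow> bool" where
  "simple_graph V E \<longleftrightarrow> finite V \<and>
     (\<forall>u v. E u v \<longrightarrow> u \<in> V \<and> v \<in> V \<and> u \<noteq> v \<and> E v u)"

definition degree :: "'a set \<Rightarrow> ('a \<Rightarrow> 'a \<Rightarrow> bool) \<Rightarrow> 'a \<Rightarrow> nat" where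
  "degree V E v = card {u \<in> V. E v u}"

definition min_degree :: "'a set \<Rightarrow> ('a \<Rightarrow> 'a \<Rightarrow> bool) \<Rightarrow> nat" where
  "min_degree V E = Min (degree V E ` V)"

definition is_clique :: "'a set \<Rightarrow> ('a \<Rightarrow> 'a \<Rightarrow> bool) \<Rightarrow> 'a set \<Rightarrow> bool" where
  "is_clique V E C \<longleftrightarrow> C \<subseteq> V \<and> (\<forall>u\<in>C. \<forall>v\<in>C. u \<noteq> v \<longrightarrow> E u v)"

definition copy_K :: "'a set \<Rightarrow> ('a \<Rightarrow> 'a \<Rightarrow> bool) \<Rightarrow> nat \<Rightarrow> 'a set \<Rightarrow> bool" where
  "copy_K V E r C \<longleftrightarrow> is_clique V E C \<and> finite C \<and> card C = r"

definition independent :: "('a \<Rightarrow> 'a \<Rightarrow> bool) \<Rightarrow> 'a set \<Rightarrow> bool" where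
  "independent E S \<longleftrightarrow> (\<forall>u\<in>S. \<forall>v\<in>S. \<not> E u v)"

definition Gamma :: "'a set \<Rightarrow> ('a \<Rightarrow> 'a \<Rightarrow> bool) \<Rightarrow> 'a set \<Rightarrow> 'a set" where
  "Gamma V E g = {v \<in> V. \<forall>u\<in>g. E u v}"

definition Kstep :: "'a set \<Rightarrow> ('a \<Rightarrow> 'a \<Rightarrow> bool) \<Rightarrow> nat \<Rightarrow> 'a set \<Rightarrow> 'a set \<Rightarrow> bool" where
  "Kstep V E k g h \<longleftrightarrow> copy_K V E k g \<and> copy_K V E k h \<and>
     (\<exists>K. copy_K V E (k+1) K \<and> g \<subseteq> K \<and> h \<subseteq> K)"

definition Kconnected :: "'a set \<Rightarrow> ('a \<Rightarrow> 'a \<Rightarrow> bool) \<Rightarrow> nat \<Rightarrow> 'a set \<Rightarrow> 'a set \<Rightarrow> bool" where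
  "Kconnected V E k g h \<longleftrightarrow> copy_K V E k g \<and> copy_K V E k h \<and> (Kstep V E k)\<^sup>*\<^sup>* g h"

definition Kfactor :: "'a set \<Rightarrow> ('a \<Rightarrow> 'a \<Rightarrow> bool) \<Rightarrow> nat \<Rightarrow> 'a set set \<Rightarrow> bool" where
  "Kfactor V E k \<F> \<longleftrightarrow> finite \<F> \<and> (\<forall>K\<in>\<F>. copy_K V E (k+1) K) \<and>
     (\<forall>K\<in>\<F>. \<forall>L\<in>\<F>. K \<noteq> L \<longrightarrow> K \<inter> L = {})"

definition connected_Kfactor :: "'a set \<Rightarrow> ('a \<Rightarrow> 'a \<Rightarrow> bool) \<Rightarrow> nat \<Rightarrow> 'a set set \<Rightarrow> bool" where
  "connected_Kfactor V E k \<F> \<longleftrightarrow> Kfactor V E k \<F> \<and>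
     (\<forall>g h. (\<exists>K\<in>\<F>. g \<subseteq> K) \<and> copy_K V E k g \<and> (\<exists>L\<in>\<F>. h \<subseteq> L) \<and> copy_K V E k h
        \<longrightarrow> Kconnected V E k g h)"

definition factor_size :: "'a set set \<Rightarrow> nat" where
  "factor_size \<F> = card (\<Union>\<F>)"

definition edge_transversal ::
  "'a set \<Rightarrow> ('a \<Rightarrow> 'a \<Rightarrow> bool) \<Rightarrow> 'a set \<Rightarrow> (nat \<Rightarrow> 'a set) \<Rightarrow> nat \<Rightarrow> 'a set \<Rightarrow> bool" where
  "edge_transversal V E U1 X j g \<longleftrightarrow>
     (\<exists>u v x. u \<in> U1 \<and> v \<in> U1 \<and> E u v \<and> (\<forall>i\<in>{1..j}. x i \<in> X i) \<and>
        g = {u, v} \<union> x ` {1..j} \<and> copy_K V E (j+2) g)"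

definition matching_in :: "('a \<Rightarrow> 'a \<Rightarrow> bool) \<Rightarrow> 'a set \<Rightarrow> 'a set set \<Rightarrow> bool" where
  "matching_in E U M \<longleftrightarrow> (\<forall>e\<in>M. \<exists>u v. e = {u, v} \<and> u \<in> U \<and> v \<in> U \<and> E u v) \<and>
     (\<forall>e\<in>M. \<forall>f\<in>M. e \<noteq> f \<longrightarrow> e \<inter> f = {})"

end

theory Submission
  imports Defs
begin

lemma card_Un4: "card (P \<union> Q \<union> R \<union> S) \<le> card P + card Q + card R + card S"
  using card_Un_le[of "P\<union>Q\<union>R" S] card_Un_le[of "P\<union>Q" R] card_Un_le[of P Q] by linarith

lemma clique_sub: "is_clique V E S \<Longrightarrow> T \<subseteq> S \<Longrightarrow> is_clique V E T"
  unfolding is_clique_def by blast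

theorem lemma5p6:
  fixes V :: "'a set" and E :: "'a \<Rightarrow> 'a \<Rightarrow> bool" and k :: nat
    and U1 U2 A :: "'a set" and X :: "nat \<Rightarrow> 'a set" and F :: "'a set set"
  assumes graph: "simple_graph V E"
    and nonempty: "V \<noteq> {}"
    and k2: "k \<ge> 2"
    and mindeg: "k * min_degree V E > (k - 1) * card V"
    and cover: "U1 \<union> U2 \<union> A \<union> (\<Union>i\<in>{1..k-1}. X i) = V"
    and disj1: "U1 \<inter> U2 = {}" "U1 \<inter> A = {}" "U2 \<inter> A = {}"
    and disj2: "\<forall>i\<in>{1..k-1}. X i \<inter> U1 = {} \<and> X i \<inter> U2 = {} \<and> X i \<inter> A = {}"
    and disj3: "\<forall>i\<in>{1..k-1}. \<forall>j\<in>{1..k-1}. i \<noteq> j \<longrightarrow> X i \<inter> X j = {}"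
    and a: "\<forall>u\<in>U1. \<forall>v\<in>U2. \<not> E u v"
    and b: "\<forall>g h. edge_transversal V E U1 X (k-2) g \<and> edge_transversal V E U1 X (k-2) h
              \<longrightarrow> Kconnected V E k g h"
    and c: "\<forall>i\<in>{1..k-1}. card (X i) \<le> card V - min_degree V E"
    and d: "\<forall>i\<in>{1..k-2}. \<forall>g. edge_transversal V E U1 X (i-1) g
              \<longrightarrow> independent E (X i \<inter> Gamma V E g)"
    and F: "matching_in E U1 F"
  shows "\<exists>\<F>. connected_Kfactor V E k \<F> \<and>
     int (factor_size \<F>) \<ge> int (k+1) * min (int (card F))
        (int k * int (min_degree V E) - int (k-1) * int (card V)
           + int (card U2) - int (card U1) - int (card A))"
proof -
  define n where "n = card V"
  define \<delta> where "\<delta> = min_degree V E"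
  define q where "q = int k * int \<delta> - int (k-1) * int n
           + int (card U2) - int (card U1) - int (card A)"
  define N where "N y = {w\<in>V. E y w}" for y
  have finV: "finite V" using graph by (simp add: simple_graph_def)
  have Esym: "E u v \<Longrightarrow> E v u" for u v using graph by (simp add: simple_graph_def)
  have EV: "E u v \<Longrightarrow> u \<in> V \<and> v \<in> V" for u v using graph by (simp add: simple_graph_def)
  have Eirr: "\<not> E u u" for u using graph by (auto simp add: simple_graph_def)
  have XV: "i \<in> {1..k-1} \<Longrightarrow> X i \<subseteq> V" for i using cover by blast
  have U1V: "U1 \<subseteq> V" "U2 \<subseteq> V" "A \<subseteq> V" using cover by auto
  have degle: "y \<in> V \<Longrightarrow> \<delta> \<le> card (N y)" for y
    unfolding \<delta>_def min_degree_def N_def degree_def using finV by simp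
  have NV: "N y \<subseteq> V" for y unfolding N_def by auto
  have nonN: "y \<in> V \<Longrightarrow> card (V - N y) \<le> n - \<delta>" for y
    using degle[of y] card_Diff_subset[OF finite_subset[OF NV finV] NV] unfolding n_def by simp
  have dlen: "\<delta> \<le> n"
  proof -
    obtain y where "y \<in> V" using nonempty by blast
    then show ?thesis using degle[of y] card_mono[OF finV NV[of y]] unfolding n_def by simp
  qed
  have Gins: "Gamma V E (insert y g) = Gamma V E g \<inter> N y" for y g
    unfolding Gamma_def N_def by auto
  have GV: "Gamma V E g \<subseteq> V" for g unfolding Gamma_def by auto

  have core: "\<exists>x. (\<forall>i\<in>{1..j}. x i \<in> X i - Used) \<and> is_clique V E ({u,v} \<union> x`{1..j})
      \<and> card ({u,v} \<union> x`{1..j}) = j+2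
      \<and> card (V - Gamma V E ({u,v} \<union> x`{1..j})) + card U2 \<le> (j+2)*(n-\<delta>)
      \<and> (\<forall>i\<in>{1..j}. i \<le> k-2 \<longrightarrow> Gamma V E ({u,v} \<union> x`{1..j}) \<inter> X i = {})"
    if jk: "j \<le> k-1" and uv: "u\<in>U1" "v\<in>U1" "E u v"
      and used: "\<forall>i\<in>{1..k-1}. card (Used \<inter> X i) \<le> m" and mq: "int m + 1 \<le> q"
    for j u v Used m
    using jk
  proof (induction j)
    case 0
    have uvV: "u \<in> V" "v \<in> V" using EV uv(3) by auto
    have "u \<noteq> v" using uv(3) Eirr by auto
    then have c2: "card {u,v} = 2" by simp
    have cl: "is_clique V E {u,v}" unfolding is_clique_def using uvV uv(3) Esym by auto
    have eqG: "V - Gamma V E {u,v} = (V - N u) \<union> (V - N v)"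
      unfolding Gamma_def N_def by auto
    have U2sub: "U2 \<subseteq> (V - N u) \<inter> (V - N v)" using a uv U1V unfolding N_def by auto
    have "card ((V - N u) \<union> (V - N v)) + card ((V - N u) \<inter> (V - N v)) = card (V - N u) + card (V - N v)"
      using card_Un_Int[of "V - N u" "V - N v"] finV by simp
    moreover have "card U2 \<le> card ((V - N u) \<inter> (V - N v))"
      by (rule card_mono[OF _ U2sub]) (use finV in auto)
    ultimately have "card (V - Gamma V E {u,v}) + card U2 \<le> 2*(n-\<delta>)"
      using nonN[OF uvV(1)] nonN[OF uvV(2)] eqG by simp
    then show ?case using c2 cl by (intro exI[of _ "\<lambda>_. undefined"]) simp
  next
    case (Suc j)
    then obtain x where xX: "\<forall>i\<in>{1..j}. x i \<in> X i - Used"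
      and cl: "is_clique V E ({u,v} \<union> x`{1..j})"
      and cg: "card ({u,v} \<union> x`{1..j}) = j+2"
      and cG: "card (V - Gamma V E ({u,v} \<union> x`{1..j})) + card U2 \<le> (j+2)*(n-\<delta>)"
      and ind: "\<forall>i\<in>{1..j}. i \<le> k-2 \<longrightarrow> Gamma V E ({u,v} \<union> x`{1..j}) \<inter> X i = {}"
      by auto
    define g where "g = {u,v} \<union> x`{1..j}"
    define i where "i = Suc j"
    have ik: "i \<in> {1..k-1}" using Suc.prems i_def by auto
    have finG: "finite (Gamma V E g)" using finite_subset[OF GV finV] .
    have sub: "Gamma V E g \<subseteq> (U1 - {u,v}) \<union> A \<union> (Gamma V E g \<inter> X i) \<union> (\<Union>l\<in>{Suc i..k-1}. X l)"
    proof
      fix w assume w: "w \<in> Gamma V E g"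
      have wV: "w \<in> V" using w GV by auto
      have Euw: "E u w" "E v w" using w unfolding Gamma_def g_def by auto
      have "w \<notin> U2" using a uv Euw by auto
      moreover have "w \<noteq> u" "w \<noteq> v" using Euw Eirr by auto
      moreover have "w \<notin> X l" if "l \<in> {1..j}" for l
      proof -
        have "l \<le> k-2" using that Suc.prems by auto
        then show ?thesis using ind that w unfolding g_def by blast
      qed
      moreover have "w \<in> U1 \<or> w \<in> U2 \<or> w \<in> A \<or> (\<exists>l\<in>{1..k-1}. w \<in> X l)"
        using wV cover by blast
      ultimately show "w \<in> (U1 - {u,v}) \<union> A \<union> (Gamma V E g \<inter> X i) \<union> (\<Union>l\<in>{Suc i..k-1}. X l)"
      proof (elim disjE)
        assume "\<exists>l\<in>{1..k-1}. w \<in> X l"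
        then obtain l where l: "l \<in> {1..k-1}" "w \<in> X l" by blast
        moreover have "l \<notin> {1..j}" using l \<open>\<And>l. l \<in> {1..j} \<Longrightarrow> w \<notin> X l\<close> by blast
        ultimately have "l = i \<or> l \<in> {Suc i..k-1}" using i_def by auto
        then show ?thesis using l w by blast
      qed auto
    qed
    have finR: "finite ((U1 - {u,v}) \<union> A \<union> (Gamma V E g \<inter> X i) \<union> (\<Union>l\<in>{Suc i..k-1}. X l))"
    proof (rule finite_subset[OF _ finV])
      have "(\<Union>l\<in>{Suc i..k-1}. X l) \<subseteq> V" by (intro UN_least XV) (use ik in auto)
      then show "(U1 - {u,v}) \<union> A \<union> (Gamma V E g \<inter> X i) \<union> (\<Union>l\<in>{Suc i..k-1}. X l) \<subseteq> V"
        using U1V GV[of g] by (intro Un_least) auto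
    qed
    have c1: "card (Gamma V E g) \<le> card (U1 - {u,v}) + card A + card (Gamma V E g \<inter> X i) + card (\<Union>l\<in>{Suc i..k-1}. X l)"
      by (rule le_trans[OF card_mono[OF finR sub] card_Un4])
    have "card (\<Union>l\<in>{Suc i..k-1}. X l) \<le> (\<Sum>l\<in>{Suc i..k-1}. card (X l))"
      by (rule card_UN_le) simp
    also have "\<dots> \<le> card {Suc i..k-1} * (n-\<delta>)"
    proof -
      have bd: "\<And>l. l \<in> {Suc i..k-1} \<Longrightarrow> card (X l) \<le> n - \<delta>"
        using c ik unfolding n_def \<delta>_def by auto
      show ?thesis using sum_bounded_above[of "{Suc i..k-1}" "\<lambda>l. card (X l)" "n-\<delta>", OF bd] by simp
    qed
    finally have c2: "card (\<Union>l\<in>{Suc i..k-1}. X l) \<le> (k-1-i)*(n-\<delta>)" by simp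
    have uvne: "u \<noteq> v" using uv(3) Eirr by auto
    have c3: "int (card (U1 - {u,v})) = int (card U1) - 2"
    proof -
      have "card (U1 - {u,v}) = card U1 - card {u,v}"
        by (rule card_Diff_subset) (use uv finite_subset[OF U1V(1) finV] in auto)
      moreover have "card {u,v} \<le> card U1"
        by (rule card_mono) (use uv finite_subset[OF U1V(1) finV] in auto)
      ultimately show ?thesis using uvne by simp
    qed
    have c4: "int (card (Gamma V E g)) = int n - int (card (V - Gamma V E g))"
    proof -
      have "card (V - Gamma V E g) = card V - card (Gamma V E g)"
        by (rule card_Diff_subset) (use finG GV in auto)
      moreover have "card (Gamma V E g) \<le> card V" by (rule card_mono[OF finV GV])
      ultimately show ?thesis unfolding n_def by simp
    qed
    have cG': "card (V - Gamma V E g) + card U2 \<le> (i+1)*(n-\<delta>)" using cG unfolding g_def i_def by simp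
    have e1: "(i+1) + (k-1-i) = k" using ik k2 by auto
    have e2: "(i+1)*(n-\<delta>) + (k-1-i)*(n-\<delta>) = k*(n-\<delta>)" using e1 by (metis add_mult_distrib)
    have e3: "int k * int \<delta> - int (k-1) * int n = int n - int (k*(n-\<delta>))"
      using dlen k2 by (simp add: of_nat_diff algebra_simps)
    have big: "int (card (Gamma V E g \<inter> X i)) \<ge> q + 2"
    proof -
      have "int ((i+1)*(n-\<delta>)) + int ((k-1-i)*(n-\<delta>)) = int (k*(n-\<delta>))"
        using e2 by (metis of_nat_add)
      moreover have "int (card (V - Gamma V E g)) + int (card U2) \<le> int ((i+1)*(n-\<delta>))"
        using cG' by linarith
      moreover have "int (card (\<Union>l\<in>{Suc i..k-1}. X l)) \<le> int ((k-1-i)*(n-\<delta>))" using c2 by linarith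
      moreover have "int (card (Gamma V E g)) \<le> int (card (U1 - {u,v})) + int (card A) + int (card (Gamma V E g \<inter> X i)) + int (card (\<Union>l\<in>{Suc i..k-1}. X l))"
        using c1 by linarith
      ultimately show ?thesis using c3 c4 e3 unfolding q_def by linarith
    qed
    have "\<not> Gamma V E g \<inter> X i \<subseteq> Used"
    proof
      assume "Gamma V E g \<inter> X i \<subseteq> Used"
      then have "Gamma V E g \<inter> X i \<subseteq> Used \<inter> X i" by auto
      then have "card (Gamma V E g \<inter> X i) \<le> card (Used \<inter> X i)"
        by (rule card_mono[rotated]) (use finite_subset[OF XV[OF ik] finV] in auto)
      also have "\<dots> \<le> m" using used ik by auto
      finally show False using big mq by linarith
    qed
    then obtain y where y: "y \<in> Gamma V E g" "y \<in> X i" "y \<notin> Used" by auto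
    define x' where "x' = x(i := y)"
    have img: "{u,v} \<union> x'`{1..Suc j} = insert y g"
      unfolding x'_def g_def i_def by (auto simp: fun_upd_image atLeastAtMostSuc_conv)
    have yV: "y \<in> V" using y GV by auto
    have yg: "y \<notin> g" using y(1) Eirr unfolding Gamma_def by auto
    have fing: "finite g" unfolding g_def by simp
    have P1: "\<forall>l\<in>{1..Suc j}. x' l \<in> X l - Used"
      using xX y unfolding x'_def i_def by auto
    have P2: "is_clique V E (insert y g)"
      using cl y(1) yV Esym unfolding is_clique_def Gamma_def g_def by auto
    have P3: "card (insert y g) = Suc j + 2" using yg fing cg unfolding g_def by simp
    have "V - Gamma V E (insert y g) = (V - Gamma V E g) \<union> (V - N y)" using Gins by auto
    then have "card (V - Gamma V E (insert y g)) \<le> card (V - Gamma V E g) + card (V - N y)"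
      by (simp add: card_Un_le)
    then have P4: "card (V - Gamma V E (insert y g)) + card U2 \<le> (Suc j + 2)*(n-\<delta>)"
      using cG' nonN[OF yV] unfolding i_def by simp
    have P5: "\<forall>l\<in>{1..Suc j}. l \<le> k-2 \<longrightarrow> Gamma V E (insert y g) \<inter> X l = {}"
    proof (intro ballI impI)
      fix l assume l: "l \<in> {1..Suc j}" "l \<le> k-2"
      have Gsub: "Gamma V E (insert y g) \<subseteq> Gamma V E g" using Gins by auto
      show "Gamma V E (insert y g) \<inter> X l = {}"
      proof (cases "l \<le> j")
        case True
        then show ?thesis using ind l Gsub unfolding g_def by fastforce
      next
        case False
        then have li: "l = i" using l i_def by auto
        have et: "edge_transversal V E U1 X (i-1) g"
          unfolding edge_transversal_def copy_K_def
          using uv xX cl cg fing unfolding g_def i_def by auto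
        have "independent E (X i \<inter> Gamma V E g)" using d et l li by auto
        moreover have "E y w" if "w \<in> Gamma V E (insert y g)" for w
          using that unfolding Gamma_def by auto
        ultimately show ?thesis using li y Gsub unfolding independent_def by blast
      qed
    qed
    show ?case using P1 P2 P3 P4 P5 img by (intro exI[of _ x']) simp
  qed
  have outer: "\<exists>\<F>. finite \<F> \<and> (\<forall>K\<in>\<F>. copy_K V E (k+1) K \<and> (\<exists>g. edge_transversal V E U1 X (k-2) g \<and> g \<subseteq> K))
      \<and> (\<forall>K\<in>\<F>. \<forall>L\<in>\<F>. K \<noteq> L \<longrightarrow> K \<inter> L = {}) \<and> card (\<Union>\<F>) = (k+1) * card F0 \<and> \<Union>\<F> \<subseteq> V
      \<and> \<Union>\<F> \<inter> U1 \<subseteq> \<Union>F0 \<and> (\<forall>i\<in>{1..k-1}. card (\<Union>\<F> \<inter> X i) \<le> card F0)"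
    if "finite F0" "F0 \<subseteq> F" "int (card F0) \<le> q" for F0
    using that
  proof (induction F0 rule: finite_induct)
    case empty
    show ?case by (intro exI[of _ "{}"]) simp
  next
    case (insert e F0)
    have cins: "card (insert e F0) = Suc (card F0)" using insert.hyps by simp
    have p1: "F0 \<subseteq> F" "int (card F0) \<le> q" using insert.prems cins by auto
    obtain \<F> where fin: "finite \<F>"
      and good: "\<forall>K\<in>\<F>. copy_K V E (k+1) K \<and> (\<exists>g. edge_transversal V E U1 X (k-2) g \<and> g \<subseteq> K)"
      and pd: "\<forall>K\<in>\<F>. \<forall>L\<in>\<F>. K \<noteq> L \<longrightarrow> K \<inter> L = {}"
      and cU: "card (\<Union>\<F>) = (k+1) * card F0" and UV: "\<Union>\<F> \<subseteq> V"
      and U1s: "\<Union>\<F> \<inter> U1 \<subseteq> \<Union>F0" and Xs: "\<forall>i\<in>{1..k-1}. card (\<Union>\<F> \<inter> X i) \<le> card F0"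
      using insert.IH[OF p1] by blast
    have eF: "e \<in> F" using insert.prems by auto
    have F1: "\<forall>e\<in>F. \<exists>u v. e = {u, v} \<and> u \<in> U1 \<and> v \<in> U1 \<and> E u v"
      using F unfolding matching_in_def by (rule conjunct1)
    obtain u v where e: "e = {u,v}" "u \<in> U1" "v \<in> U1" "E u v"
      using bspec[OF F1 eF] by (elim exE conjE) simp
    have mq: "int (card F0) + 1 \<le> q" using insert.prems(2) cins by simp
    obtain x where xX: "\<forall>i\<in>{1..k-1}. x i \<in> X i - \<Union>\<F>"
      and cl: "is_clique V E ({u,v} \<union> x`{1..k-1})"
      and cK: "card ({u,v} \<union> x`{1..k-1}) = k-1+2"
      using core[OF le_refl e(2-4) Xs mq] by blast
    define K where "K = {u,v} \<union> x`{1..k-1}"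
    define g0 where "g0 = {u,v} \<union> x`{1..k-2}"
    have km: "k - 1 = Suc (k-2)" using k2 by simp
    have Kins: "K = insert (x (k-1)) g0"
    proof -
      have iv: "{1..k-1} = insert (k-1) {1..k-2}"
        unfolding km by (rule atLeastAtMostSuc_conv) simp
      show ?thesis unfolding K_def g0_def iv image_insert by blast
    qed
    have fing0: "finite g0" unfolding g0_def by simp
    have cK': "card K = k+1" using cK k2 unfolding K_def by simp
    have "card g0 \<le> card {u,v} + card (x`{1..k-2})" unfolding g0_def by (rule card_Un_le)
    also have "\<dots> \<le> 2 + (k-2)"
    proof -
      have "card {u,v} \<le> 2" by (cases "u = v") auto
      then show ?thesis using card_image_le[of "{1..k-2}" x] by simp
    qed
    finally have g0le: "card g0 \<le> k" using k2 by simp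
    have "card K \<le> Suc (card g0)" unfolding Kins using fing0 by (simp add: card_insert_if)
    then have cg0: "card g0 = k - 2 + 2" using cK' g0le k2 by simp
    have et: "edge_transversal V E U1 X (k-2) g0"
      unfolding edge_transversal_def copy_K_def
    proof (rule exI[of _ u], rule exI[of _ v], rule exI[of _ x], intro conjI)
      show "\<forall>i\<in>{1..k-2}. x i \<in> X i"
      proof
        fix i assume "i \<in> {1..k-2}"
        then have "i \<in> {1..k-1}" by auto
        then show "x i \<in> X i" using xX by blast
      qed
      have "g0 \<subseteq> K" unfolding Kins by blast
      then show "is_clique V E g0" using cl unfolding K_def[symmetric] by (rule clique_sub[rotated])
    qed (use e fing0 cg0 g0_def in simp_all)
    have KV: "K \<subseteq> V" using cl unfolding K_def is_clique_def by auto
    have finK: "finite K" unfolding K_def by simp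
    have Kdisj: "K \<inter> \<Union>\<F> = {}"
    proof (rule ccontr)
      assume "K \<inter> \<Union>\<F> \<noteq> {}"
      then obtain w where w: "w \<in> K" "w \<in> \<Union>\<F>" by blast
      show False
      proof (cases "w \<in> {u,v}")
        case True
        then have "w \<in> \<Union>F0" using U1s w e by auto
        then obtain e' where e': "e' \<in> F0" "w \<in> e'" by blast
        have "e' \<noteq> e" using e' insert.hyps by auto
        moreover have "e' \<in> F" using e' insert.prems by auto
        ultimately have "e \<inter> e' = {}" using F eF unfolding matching_in_def by blast
        then show False using True e e' by auto
      next
        case False
        then obtain l where "l \<in> {1..k-1}" "w = x l" using w unfolding K_def by auto
        then show False using xX w by auto
      qed
    qed
    have KU1: "K \<inter> U1 \<subseteq> \<Union>(insert e F0)"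
    proof
      fix w assume w: "w \<in> K \<inter> U1"
      show "w \<in> \<Union>(insert e F0)"
      proof (cases "w \<in> {u,v}")
        case True then show ?thesis using e by auto
      next
        case False
        then obtain l where l: "l \<in> {1..k-1}" "w = x l" using w unfolding K_def by auto
        then have "w \<in> X l" using xX by auto
        then show ?thesis using disj2 l w by auto
      qed
    qed
    have KX: "K \<inter> X i \<subseteq> {x i}" if i: "i \<in> {1..k-1}" for i
    proof
      fix w assume w: "w \<in> K \<inter> X i"
      show "w \<in> {x i}"
      proof (cases "w \<in> {u,v}")
        case True then show ?thesis using e disj2 i w by auto
      next
        case False
        then obtain l where l: "l \<in> {1..k-1}" "w = x l" using w unfolding K_def by auto
        then have "w \<in> X l" using xX by auto
        then have "l = i" using disj3 l i w by blast
        then show ?thesis using l by simp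
      qed
    qed
    have finU: "finite (\<Union>\<F>)" using finite_subset[OF UV finV] .
    show ?case
    proof (intro exI[of _ "insert K \<F>"] conjI)
      show "finite (insert K \<F>)" using fin by simp
      show "\<forall>K'\<in>insert K \<F>. copy_K V E (k+1) K' \<and> (\<exists>g. edge_transversal V E U1 X (k-2) g \<and> g \<subseteq> K')"
      proof
        fix K' assume K': "K' \<in> insert K \<F>"
        have clK: "is_clique V E K" using cl unfolding K_def .
        have g0K: "g0 \<subseteq> K" unfolding Kins by blast
        show "copy_K V E (k+1) K' \<and> (\<exists>g. edge_transversal V E U1 X (k-2) g \<and> g \<subseteq> K')"
        proof (cases "K' = K")
          case True
          then show ?thesis using clK finK cK' et g0K unfolding copy_K_def by blast
        next
          case False
          then show ?thesis using K' good by blast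
        qed
      qed
      show "\<forall>K'\<in>insert K \<F>. \<forall>L\<in>insert K \<F>. K' \<noteq> L \<longrightarrow> K' \<inter> L = {}"
        using pd Kdisj by blast
      have "card (\<Union>(insert K \<F>)) = card K + card (\<Union>\<F>)"
        using card_Un_disjoint[OF finK finU Kdisj] by simp
      then show "card (\<Union>(insert K \<F>)) = (k+1) * card (insert e F0)"
        using cK' cU cins by simp
      show "\<Union>(insert K \<F>) \<subseteq> V" using KV UV by simp
      show "\<Union>(insert K \<F>) \<inter> U1 \<subseteq> \<Union>(insert e F0)" using KU1 U1s by auto
      show "\<forall>i\<in>{1..k-1}. card (\<Union>(insert K \<F>) \<inter> X i) \<le> card (insert e F0)"
      proof
        fix i assume i: "i \<in> {1..k-1}"
        have "card (\<Union>(insert K \<F>) \<inter> X i) \<le> card (K \<inter> X i) + card (\<Union>\<F> \<inter> X i)"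
          using card_Un_le[of "K \<inter> X i" "\<Union>\<F> \<inter> X i"] by (simp add: Int_Un_distrib2)
        moreover have "card (K \<inter> X i) \<le> 1"
          using card_mono[OF _ KX[OF i]] by simp
        ultimately show "card (\<Union>(insert K \<F>) \<inter> X i) \<le> card (insert e F0)"
          using Xs i cins by fastforce
      qed
    qed
  qed
  define M where "M = min (int (card F)) q"
  have goal_eq: "(int k * int (min_degree V E) - int (k-1) * int (card V)
           + int (card U2) - int (card U1) - int (card A)) = q"
    unfolding q_def n_def \<delta>_def ..
  show ?thesis
  proof (cases "M \<le> 0")
    case True
    have "connected_Kfactor V E k {}"
      unfolding connected_Kfactor_def Kfactor_def by simp
    moreover have "int (k+1) * M \<le> 0" using True by (simp add: mult_nonneg_nonpos)
    ultimately show ?thesis unfolding goal_eq M_def[symmetric] factor_size_def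
      by (intro exI[of _ "{}"]) simp
  next
    case False
    then have "nat M \<le> card F" unfolding M_def by simp
    then obtain F0 where F0: "F0 \<subseteq> F" "card F0 = nat M" "finite F0"
      by (rule obtain_subset_with_card_n)
    have "int (card F0) \<le> q" using F0 False unfolding M_def by simp
    then obtain \<F> where fin: "finite \<F>"
      and good: "\<forall>K\<in>\<F>. copy_K V E (k+1) K \<and> (\<exists>g. edge_transversal V E U1 X (k-2) g \<and> g \<subseteq> K)"
      and pd: "\<forall>K\<in>\<F>. \<forall>L\<in>\<F>. K \<noteq> L \<longrightarrow> K \<inter> L = {}"
      and cU: "card (\<Union>\<F>) = (k+1) * card F0"
      using outer[OF F0(3) F0(1)] by blast
    have kk: "k - 2 + 2 = k" using k2 by simp
    have conn: "Kconnected V E k g h"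
      if g: "K \<in> \<F>" "g \<subseteq> K" "copy_K V E k g" and h: "L \<in> \<F>" "h \<subseteq> L" "copy_K V E k h" for g h K L
    proof -
      obtain gK where gK: "edge_transversal V E U1 X (k-2) gK" "gK \<subseteq> K" using good g by blast
      obtain hL where hL: "edge_transversal V E U1 X (k-2) hL" "hL \<subseteq> L" using good h by blast
      have cgK: "copy_K V E k gK" using gK(1) unfolding edge_transversal_def kk by blast
      have chL: "copy_K V E k hL" using hL(1) unfolding edge_transversal_def kk by blast
      have cK: "copy_K V E (k+1) K" using good g(1) by blast
      have cL: "copy_K V E (k+1) L" using good h(1) by blast
      have s1: "Kstep V E k g gK" unfolding Kstep_def using g(2,3) gK(2) cgK cK by blast
      have s2: "Kstep V E k hL h" unfolding Kstep_def using h(2,3) hL(2) chL cL by blast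
      have "(Kstep V E k)\<^sup>*\<^sup>* gK hL" using b gK(1) hL(1) unfolding Kconnected_def by blast
      then have "(Kstep V E k)\<^sup>*\<^sup>* g h"
        using s1 s2 by (meson converse_rtranclp_into_rtranclp rtranclp.rtrancl_into_rtrancl)
      then show ?thesis unfolding Kconnected_def using g h by blast
    qed
    have "connected_Kfactor V E k \<F>"
      unfolding connected_Kfactor_def Kfactor_def
    proof (intro conjI allI impI)
      show "finite \<F>" by (rule fin)
      show "\<forall>K\<in>\<F>. copy_K V E (k + 1) K" using good by blast
      show "\<forall>K\<in>\<F>. \<forall>L\<in>\<F>. K \<noteq> L \<longrightarrow> K \<inter> L = {}" by (rule pd)
      fix g h
      assume H: "(\<exists>K\<in>\<F>. g \<subseteq> K) \<and> copy_K V E k g \<and> (\<exists>L\<in>\<F>. h \<subseteq> L) \<and> copy_K V E k h"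
      then obtain K L where "K \<in> \<F>" "g \<subseteq> K" "L \<in> \<F>" "h \<subseteq> L" by blast
      then show "Kconnected V E k g h" using conn H by blast
    qed
    moreover have "int (factor_size \<F>) = int (k+1) * M"
      unfolding factor_size_def cU using F0 False by (simp add: algebra_simps)
    ultimately show ?thesis unfolding goal_eq M_def[symmetric] by (intro exI[of _ \<F>]) simp
  qed
qed
end
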